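(* Let $\beta>0$, $0<\alpha<1$, let $n$ be a positive integer, $g\in H(\mathbb{D})$, and $I_g^{n,0}f=I^n(fg)$. Then the following are equivalent: (i) $I_g^{n,0}:\mathcal{B}^{\alpha}\to\mathcal{B}^{\beta}$ is bounded; (ii) $I_g^{n,0}:\mathcal{B}^{\alpha}\to\mathcal{B}^{\beta}$ is compact; (iii) $\sup_{z\in\mathbb{D}}(1-|z|^2)^{n+\beta-1}|g(z)|<\infty$.
   Context: $\mathbb{D}$ is the open unit disc in $\mathbb{C}$ and $H(\mathbb{D})$ the space of analytic functions on $\mathbb{D}$. For $\gamma>0$, $\mathcal{B}^{\gamma}$ is the Banach space of $f\in H(\mathbb{D})$ with $\|f\|_{\mathcal{B}^{\gamma}}=|f(0)|+\sup_{z\in\mathbb{D}}(1-|z|^2)^{\gamma}|f'(z)|<\infty$. $I$ is the integration operator $If(z)=\int_0^z f(\zeta)\,d\zeta$ and $I^n$ its $n$th iterate. An operator is bounded (compact) from $\mathcal{B}^\alpha$ to $\mathcal{B}^\beta$ if it maps $\mathcal{B}^\alpha$ into $\mathcal{B}^\beta$ and is bounded (compact) as a linear operator between these Banach spaces. *)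

theory Defs
  imports "HOL-Complex_Analysis.Complex_Analysis"
begin

definition bloch_space :: "real \<Rightarrow> (complex \<Rightarrow> complex) set" where
  "bloch_space \<gamma> = {f. f holomorphic_on ball 0 1 \<and>
     bdd_above ((\<lambda>z. (1 - (cmod z)\<^sup>2) powr \<gamma> * cmod (deriv f z)) ` ball 0 1)}"

definition bloch_norm :: "real \<Rightarrow> (complex \<Rightarrow> complex) \<Rightarrow> real" where
  "bloch_norm \<gamma> f = cmod (f 0) +
     (SUP z\<in>ball 0 1. (1 - (cmod z)\<^sup>2) powr \<gamma> * cmod (deriv f z))"

definition intop :: "(complex \<Rightarrow> complex) \<Rightarrow> complex \<Rightarrow> complex" where
  "intop f z = contour_integral (linepath 0 z) f"

definition bounded_op_bloch ::
  "((complex \<Rightarrow> complex) \<Rightarrow> (complex \<Rightarrow> complex)) \<Rightarrow> real \<Rightarrow> real \<Rightarrow> bool" where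
  "bounded_op_bloch T \<alpha> \<beta> \<longleftrightarrow>
     (\<forall>f\<in>bloch_space \<alpha>. T f \<in> bloch_space \<beta>) \<and>
     (\<exists>C. \<forall>f\<in>bloch_space \<alpha>. bloch_norm \<beta> (T f) \<le> C * bloch_norm \<alpha> f)"

definition compact_op_bloch ::
  "((complex \<Rightarrow> complex) \<Rightarrow> (complex \<Rightarrow> complex)) \<Rightarrow> real \<Rightarrow> real \<Rightarrow> bool" where
  "compact_op_bloch T \<alpha> \<beta> \<longleftrightarrow>
     (\<forall>f\<in>bloch_space \<alpha>. T f \<in> bloch_space \<beta>) \<and>
     (\<forall>F::nat \<Rightarrow> complex \<Rightarrow> complex.
        (\<forall>k. F k \<in> bloch_space \<alpha>) \<and> (\<exists>M. \<forall>k. bloch_norm \<alpha> (F k) \<le> M) \<longrightarrow>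
        (\<exists>r h. strict_mono r \<and> h \<in> bloch_space \<beta> \<and>
           (\<lambda>k. bloch_norm \<beta> (\<lambda>z. T (F (r k)) z - h z)) \<longlonglongrightarrow> 0))"

end

theory Submission
  imports Defs "HOL-Complex_Analysis.Complex_Analysis"
begin

lemma seg_in_ball: "x \<in> ball (0::complex) 1 \<Longrightarrow> y \<in> ball 0 1 \<Longrightarrow> closed_segment x y \<subseteq> ball 0 1"
  using convex_ball[of "0::complex" 1] unfolding convex_contains_segment by blast

lemma intop_deriv:
  assumes h: "h holomorphic_on ball 0 1" and z: "z \<in> ball 0 1"
  shows "(intop h has_field_derivative h z) (at z)"
proof -
  have "(intop h has_field_derivative h z) (at z within ball 0 1)"
    unfolding intop_def
  proof (rule triangle_contour_integrals_convex_primitive[where S="ball 0 1"])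
    show "continuous_on (ball 0 1) h" using h holomorphic_on_imp_continuous_on by blast
    fix b c assume b: "b \<in> ball (0::complex) 1" and c: "c \<in> ball (0::complex) 1"
    have "(h has_contour_integral 0) (linepath 0 b +++ linepath b c +++ linepath c 0)"
    proof (rule Cauchy_theorem_convex_simple[OF h])
      have "path_image (linepath 0 b +++ linepath b c +++ linepath c 0) \<subseteq> ball 0 1"
      proof -
        have "closed_segment x y \<subseteq> ball 0 1" if "x \<in> ball 0 1" "y \<in> ball 0 1" for x y :: complex
          using that by (rule seg_in_ball)
        then show ?thesis using b c by (simp add: path_image_join)
      qed
      then show "path_image (linepath 0 b +++ linepath b c +++ linepath c 0) \<subseteq> ball 0 1" .
    qed auto
    then show "contour_integral (linepath 0 b) h + contour_integral (linepath b c) h + contour_integral (linepath c 0) h = 0"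
      by (rule has_chain_integral_chain_integral3)
  qed (use z in auto)
  then show ?thesis using at_within_open[OF z] by simp
qed

lemma intop_holo: "h holomorphic_on ball 0 1 \<Longrightarrow> intop h holomorphic_on ball 0 1"
  using intop_deriv holomorphic_on_open by blast

lemma intop_0: "intop h 0 = 0"
  by (simp add: intop_def)

lemma intop_deriv_eq: "h holomorphic_on ball 0 1 \<Longrightarrow> z \<in> ball 0 1 \<Longrightarrow> deriv (intop h) z = h z"
  using intop_deriv DERIV_imp_deriv by blast

lemma intop_pow_holo: "h holomorphic_on ball 0 1 \<Longrightarrow> (intop ^^ k) h holomorphic_on ball 0 1"
  by (induction k) (auto intro: intop_holo)

lemma intop_cong:
  assumes "\<And>w. w \<in> ball 0 1 \<Longrightarrow> a w = b w" "z \<in> ball 0 1"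
  shows "intop a z = intop b z"
proof -
  have "closed_segment 0 z \<subseteq> ball 0 1"
    using assms(2) by (intro seg_in_ball) auto
  then show ?thesis unfolding intop_def
    by (intro contour_integral_eq) (use assms(1) in auto)
qed

lemma intop_diff:
  assumes a: "a holomorphic_on ball 0 1" and b: "b holomorphic_on ball 0 1" and z: "z \<in> ball 0 1"
  shows "intop (\<lambda>w. a w - b w) z = intop a z - intop b z"
proof -
  have seg: "closed_segment 0 z \<subseteq> ball 0 1"
    using z by (intro seg_in_ball) auto
  have "a contour_integrable_on linepath 0 z" "b contour_integrable_on linepath 0 z"
    using seg a b by (auto intro!: contour_integrable_continuous_linepath
        intro: continuous_on_subset holomorphic_on_imp_continuous_on)
  then show ?thesis unfolding intop_def by (rule contour_integral_diff)
qed

lemma intop_pow_diff: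
  assumes a: "a holomorphic_on ball 0 1" and b: "b holomorphic_on ball 0 1"
  shows "z \<in> ball 0 1 \<Longrightarrow> (intop ^^ k) (\<lambda>w. a w - b w) z = (intop ^^ k) a z - (intop ^^ k) b z"
proof (induction k arbitrary: z)
  case 0 then show ?case by simp
next
  case (Suc k)
  have "(intop ^^ Suc k) (\<lambda>w. a w - b w) z = intop (\<lambda>w. (intop ^^ k) a w - (intop ^^ k) b w) z"
    by (simp only: funpow.simps o_apply, rule intop_cong) (use Suc in auto)
  also have "\<dots> = (intop ^^ Suc k) a z - (intop ^^ Suc k) b z"
    using intop_diff[OF intop_pow_holo[OF a] intop_pow_holo[OF b] Suc.prems] by simp
  finally show ?case .
qed

lemma seg_bound:
  fixes F :: "complex \<Rightarrow> complex" and c K a :: real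
  assumes F: "F holomorphic_on ball 0 1" and z: "z \<in> ball 0 1" and c: "0 < c" "c \<noteq> 1"
    and a: "0 \<le> a" "a < 1"
    and bnd: "\<And>\<xi>. \<xi> \<in> ball 0 1 \<Longrightarrow> (1 - (cmod \<xi>)\<^sup>2) powr c * cmod (deriv F \<xi>) \<le> K"
  shows "cmod (F z - F (of_real a * z)) \<le> K / (1 - c) * ((1 - a * cmod z) powr (1 - c) - (1 - cmod z) powr (1 - c))"
proof -
  define r where "r = cmod z"
  have r: "0 \<le> r" "r < 1" using z by (auto simp: r_def)
  have tz: "of_real t * z \<in> ball 0 1" if "0 \<le> t" "t \<le> 1" for t
  proof -
    have "cmod (of_real t * z) = t * r" using that by (simp add: norm_mult r_def)
    also have "\<dots> \<le> r" using that r by (simp add: mult_left_le_one_le)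
    finally show ?thesis using r by simp
  qed
  have lin: "((\<lambda>t. of_real t * z) has_vector_derivative z) (at t)" for t :: real
    by (auto intro!: derivative_eq_intros)
  have fd: "((\<lambda>t. F (of_real t * z)) has_vector_derivative (z * deriv F (of_real t * z))) (at t)"
    if "0 \<le> t" "t \<le> 1" for t
  proof -
    have "(F has_field_derivative deriv F (of_real t * z)) (at (of_real t * z))"
      using holomorphic_derivI[OF F open_ball tz[OF that]] by simp
    from field_vector_diff_chain_at[OF lin this] show ?thesis by (simp add: o_def)
  qed
  have pos: "0 < 1 - t * r" if "0 \<le> t" "t \<le> 1" for t
  proof -
    have "t * r \<le> r" using that r by (simp add: mult_left_le_one_le)
    then show ?thesis using r by simp
  qed
  define \<phi> where "\<phi> t = - K / (1 - c) * (1 - t * r) powr (1 - c)" for t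
  have \<phi>d: "(\<phi> has_vector_derivative (K * r * (1 - t * r) powr (- c))) (at t)"
    if "0 \<le> t" "t \<le> 1" for t
  proof -
    have "(\<phi> has_real_derivative (- K / (1 - c) * ((1 - c) * (1 - t * r) powr (1 - c - 1) * (0 - (1 * r))))) (at t)"
      unfolding \<phi>_def using pos[OF that]
      by (auto intro!: derivative_eq_intros)
    moreover have "- K / (1 - c) * ((1 - c) * (1 - t * r) powr (1 - c - 1) * (0 - (1 * r))) = K * r * (1 - t * r) powr (- c)"
      using c by (simp add: field_simps)
    ultimately show ?thesis by (simp add: has_real_derivative_iff_has_vector_derivative)
  qed
  have "cmod ((\<lambda>t. F (of_real t * z)) 1 - (\<lambda>t. F (of_real t * z)) a) \<le> \<phi> 1 - \<phi> a"
  proof (rule differentiable_bound_general[OF a(2)])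
    show "continuous_on {a..1} (\<lambda>t. F (of_real t * z))"
      using fd a by (intro continuous_at_imp_continuous_on ballI) (meson atLeastAtMost_iff has_vector_derivative_continuous order_trans)
    show "continuous_on {a..1} \<phi>"
      using \<phi>d a by (intro continuous_at_imp_continuous_on ballI) (meson atLeastAtMost_iff has_vector_derivative_continuous order_trans)
    fix t assume t: "a < t" "t < 1"
    then have t0: "0 \<le> t" "t \<le> 1" using a by auto
    show "((\<lambda>t. F (of_real t * z)) has_vector_derivative (z * deriv F (of_real t * z))) (at t)"
      using fd t0 by blast
    show "(\<phi> has_vector_derivative (K * r * (1 - t * r) powr (- c))) (at t)"
      using \<phi>d t0 by blast
    define \<xi> where "\<xi> = of_real t * z"
    have \<xi>: "\<xi> \<in> ball 0 1" using tz[OF t0] by (simp add: \<xi>_def)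
    have n\<xi>: "cmod \<xi> = t * r" using t0 by (simp add: \<xi>_def norm_mult r_def)
    have w: "1 - t * r \<le> 1 - (cmod \<xi>)\<^sup>2"
    proof -
      have "(t * r) * (t * r) \<le> t * r" using t0 r pos[OF t0] by (simp add: mult_left_le_one_le)
      then show ?thesis by (simp add: n\<xi> power2_eq_square)
    qed
    have b1: "(1 - (cmod \<xi>)\<^sup>2) powr c * cmod (deriv F \<xi>) \<le> K" using bnd[OF \<xi>] .
    have "(1 - t * r) powr c * cmod (deriv F \<xi>) \<le> (1 - (cmod \<xi>)\<^sup>2) powr c * cmod (deriv F \<xi>)"
      using w pos[OF t0] c by (intro mult_right_mono powr_mono2) auto
    with b1 have "(1 - t * r) powr c * cmod (deriv F \<xi>) \<le> K" by linarith
    then have "cmod (deriv F \<xi>) \<le> K * (1 - t * r) powr (- c)"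
      using pos[OF t0] by (simp add: powr_minus field_simps)
    then have "r * cmod (deriv F \<xi>) \<le> r * (K * (1 - t * r) powr (- c))"
      using r by (simp add: mult_left_mono)
    then show "cmod (z * deriv F (of_real t * z)) \<le> K * r * (1 - t * r) powr (- c)"
      by (simp add: norm_mult r_def \<xi>_def mult_ac)
  qed
  then show ?thesis
    by (simp add: \<phi>_def r_def diff_divide_distrib right_diff_distrib)
qed

lemma le_powr_small: "0 \<le> (x::real) \<Longrightarrow> x \<le> 1 \<Longrightarrow> 0 < p \<Longrightarrow> p \<le> 1 \<Longrightarrow> x \<le> x powr p"
  by (metis powr_mono' powr_one)

lemma powr_subadd:
  fixes x y p :: real
  assumes "0 \<le> x" "0 \<le> y" "0 < p" "p \<le> 1"
  shows "(x + y) powr p \<le> x powr p + y powr p"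
proof (cases "x + y = 0")
  case True then show ?thesis by simp
next
  case False
  define s where "s = x + y"
  have s: "0 < s" using False assms by (simp add: s_def)
  have "x / s + y / s = (x + y) / s" by (simp add: add_divide_distrib)
  also have "\<dots> = 1" using s s_def by simp
  finally have "1 = x / s + y / s" by simp
  also have "\<dots> \<le> (x / s) powr p + (y / s) powr p"
    using assms s by (intro add_mono le_powr_small) (auto simp: s_def field_simps)
  also have "\<dots> = (x powr p + y powr p) / s powr p"
    using assms s by (simp add: powr_divide add_divide_distrib)
  finally have "s powr p \<le> x powr p + y powr p" using s by (simp add: le_divide_eq)
  then show ?thesis by (simp add: s_def)
qed

lemma intop_growth:
  assumes h: "h holomorphic_on ball 0 1" and g: "1 < \<gamma>"
    and bnd: "\<And>z. z \<in> ball 0 1 \<Longrightarrow> (1 - (cmod z)\<^sup>2) powr \<gamma> * cmod (h z) \<le> K"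
    and z: "z \<in> ball 0 1"
  shows "(1 - (cmod z)\<^sup>2) powr (\<gamma> - 1) * cmod (intop h z) \<le> K * 2 powr (\<gamma> - 1) / (\<gamma> - 1)"
proof -
  have K: "0 \<le> K" using bnd[of 0] by simp (meson norm_ge_zero order_trans)
  define r where "r = cmod z"
  have r: "0 \<le> r" "r < 1" using z by (auto simp: r_def)
  have "cmod (intop h z - intop h (of_real 0 * z)) \<le> K / (1 - \<gamma>) * ((1 - 0 * cmod z) powr (1 - \<gamma>) - (1 - cmod z) powr (1 - \<gamma>))"
    using g by (intro seg_bound[OF intop_holo[OF h] z]) (auto simp: intop_deriv_eq[OF h] bnd)
  then have "cmod (intop h z) \<le> K / (\<gamma> - 1) * ((1 - r) powr (1 - \<gamma>) - 1)"
    using g by (simp add: intop_0 r_def field_simps)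
  also have "\<dots> \<le> K / (\<gamma> - 1) * (1 - r) powr (1 - \<gamma>)"
    using g K by (intro mult_left_mono) auto
  finally have I: "cmod (intop h z) \<le> K / (\<gamma> - 1) * (1 - r) powr (1 - \<gamma>)" .
  have w: "1 - (cmod z)\<^sup>2 = (1 - r) * (1 + r)" by (simp add: r_def power2_eq_square algebra_simps)
  have "(1 - (cmod z)\<^sup>2) powr (\<gamma> - 1) * cmod (intop h z) \<le> (1 - (cmod z)\<^sup>2) powr (\<gamma> - 1) * (K / (\<gamma> - 1) * (1 - r) powr (1 - \<gamma>))"
    using I by (intro mult_left_mono) auto
  also have "\<dots> = K / (\<gamma> - 1) * (1 + r) powr (\<gamma> - 1)"
  proof -
    have e1: "(1 - (cmod z)\<^sup>2) powr (\<gamma>-1) = (1-r) powr (\<gamma>-1) * (1+r) powr (\<gamma>-1)"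
      using r by (simp add: w powr_mult)
    have e2: "(1-r) powr (1-\<gamma>) * (1-r) powr (\<gamma>-1) = 1"
      using r by (simp add: powr_add[symmetric])
    have "(1 - (cmod z)\<^sup>2) powr (\<gamma> - 1) * (K / (\<gamma> - 1) * (1 - r) powr (1 - \<gamma>))
       = K / (\<gamma> - 1) * (1 + r) powr (\<gamma> - 1) * ((1-r) powr (1-\<gamma>) * (1-r) powr (\<gamma>-1))"
      by (simp add: e1 mult_ac)
    then show ?thesis using e2 by simp
  qed
  also have "\<dots> \<le> K / (\<gamma> - 1) * 2 powr (\<gamma> - 1)"
    using r g K by (intro mult_left_mono powr_mono2) auto
  finally show ?thesis by simp
qed

lemma deriv_growth:
  assumes h: "h holomorphic_on ball 0 1" and g: "0 \<le> \<gamma>"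
    and bnd: "\<And>z. z \<in> ball 0 1 \<Longrightarrow> (1 - (cmod z)\<^sup>2) powr \<gamma> * cmod (h z) \<le> K"
    and z: "z \<in> ball 0 1"
  shows "(1 - (cmod z)\<^sup>2) powr (\<gamma> + 1) * cmod (deriv h z) \<le> 4 powr (\<gamma> + 1) * K"
proof -
  have K: "0 \<le> K" using bnd[of 0] by simp (meson norm_ge_zero order_trans)
  define r where "r = cmod z"
  have r: "0 \<le> r" "r < 1" using z by (auto simp: r_def)
  define \<rho> where "\<rho> = (1 - r) / 2"
  have \<rho>: "0 < \<rho>" using r by (simp add: \<rho>_def)
  have sub: "cball z \<rho> \<subseteq> ball 0 1"
  proof
    fix x assume "x \<in> cball z \<rho>"
    then have "cmod x \<le> r + \<rho>" using norm_triangle_ineq2[of x z]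
      by (simp add: dist_norm r_def norm_minus_commute)
    moreover have "r + \<rho> < 1" using r by (simp add: \<rho>_def field_simps)
    ultimately show "x \<in> ball 0 1" by simp
  qed
  have hb: "cmod (h x) \<le> K / \<rho> powr \<gamma>" if "cmod (z - x) = \<rho>" for x
  proof -
    have x: "x \<in> ball 0 1" using sub that by (auto simp: dist_norm)
    have "cmod x \<le> r + \<rho>" using norm_triangle_ineq2[of x z] that
      by (simp add: r_def norm_minus_commute)
    then have "\<rho> \<le> 1 - cmod x" unfolding \<rho>_def by (simp add: field_simps)
    also have "\<dots> \<le> 1 - (cmod x)\<^sup>2" using x
      by (simp add: power2_eq_square mult_left_le_one_le)
    finally have wx: "\<rho> \<le> 1 - (cmod x)\<^sup>2" .
    have "\<rho> powr \<gamma> * cmod (h x) \<le> (1 - (cmod x)\<^sup>2) powr \<gamma> * cmod (h x)"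
      using wx \<rho> g by (intro mult_right_mono powr_mono2) auto
    also have "\<dots> \<le> K" using bnd[OF x] .
    finally show ?thesis using \<rho> by (simp add: field_simps)
  qed
  have "cmod ((deriv ^^ 1) h z) \<le> fact 1 * (K / \<rho> powr \<gamma>) / \<rho> ^ 1"
  proof (rule Cauchy_inequality)
    show "h holomorphic_on ball z \<rho>" using sub ball_subset_cball by (blast intro: holomorphic_on_subset[OF h])
    show "continuous_on (cball z \<rho>) h" using sub by (blast intro: continuous_on_subset[OF holomorphic_on_imp_continuous_on[OF h]])
  qed (use \<rho> hb in auto)
  then have D: "cmod (deriv h z) \<le> K / \<rho> powr (\<gamma> + 1)"
    using \<rho> by (simp add: powr_add field_simps)
  have w: "1 - (cmod z)\<^sup>2 = 2 * \<rho> * (1 + r)" by (simp add: \<rho>_def r_def power2_eq_square algebra_simps)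
  have w0: "0 \<le> 1 - (cmod z)\<^sup>2" using w \<rho> r by simp
  have "(1 - (cmod z)\<^sup>2) powr (\<gamma> + 1) * cmod (deriv h z) \<le> (1 - (cmod z)\<^sup>2) powr (\<gamma> + 1) * (K / \<rho> powr (\<gamma> + 1))"
    using D by (intro mult_left_mono) auto
  also have "\<dots> = (2 * (1 + r)) powr (\<gamma> + 1) * K"
  proof -
    have w': "1 - (cmod z)\<^sup>2 = \<rho> * (2 * (1 + r))" by (simp add: w mult_ac)
    have e1: "(1 - (cmod z)\<^sup>2) powr (\<gamma> + 1) = \<rho> powr (\<gamma> + 1) * (2 * (1 + r)) powr (\<gamma> + 1)"
      unfolding w' using \<rho> r by (intro powr_mult)
    have cancel: "\<And>q X K::real. q \<noteq> 0 \<Longrightarrow> q * X * (K / q) = X * K" by simp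
    show ?thesis unfolding e1 by (rule cancel) (use \<rho> in simp)
  qed
  also have "\<dots> \<le> 4 powr (\<gamma> + 1) * K"
    using r g K by (intro mult_right_mono powr_mono2) auto
  finally show ?thesis .
qed

lemma bloch_facts:
  assumes f: "f \<in> bloch_space \<alpha>" and \<alpha>: "0 < \<alpha>" "\<alpha> < 1"
  defines "S \<equiv> (SUP z\<in>ball 0 1. (1 - (cmod z)\<^sup>2) powr \<alpha> * cmod (deriv f z))"
  shows "f holomorphic_on ball 0 1"
    and "\<And>\<xi>. \<xi> \<in> ball 0 1 \<Longrightarrow> (1 - (cmod \<xi>)\<^sup>2) powr \<alpha> * cmod (deriv f \<xi>) \<le> S"
    and "0 \<le> S"
    and "bloch_norm \<alpha> f = cmod (f 0) + S"
    and "\<And>z. z \<in> ball 0 1 \<Longrightarrow> cmod (f z) \<le> cmod (f 0) + S / (1 - \<alpha>)"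
    and "\<And>z a. z \<in> ball 0 1 \<Longrightarrow> 0 \<le> a \<Longrightarrow> a < 1 \<Longrightarrow>
           cmod (f z - f (of_real a * z)) \<le> S / (1 - \<alpha>) * (1 - a) powr (1 - \<alpha>)"
proof -
  show hol: "f holomorphic_on ball 0 1" using f by (simp add: bloch_space_def)
  have bdd: "bdd_above ((\<lambda>z. (1 - (cmod z)\<^sup>2) powr \<alpha> * cmod (deriv f z)) ` ball 0 1)"
    using f by (simp add: bloch_space_def)
  show bnd: "\<And>\<xi>. \<xi> \<in> ball 0 1 \<Longrightarrow> (1 - (cmod \<xi>)\<^sup>2) powr \<alpha> * cmod (deriv f \<xi>) \<le> S"
    unfolding S_def using bdd by (rule cSUP_upper2) auto
  show "0 \<le> S" using bnd[of 0] by simp (meson norm_ge_zero order_trans)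
  then have S0: "0 \<le> S" .
  show "bloch_norm \<alpha> f = cmod (f 0) + S" by (simp add: bloch_norm_def S_def)
  have sb: "cmod (f z - f (of_real a * z)) \<le> S / (1 - \<alpha>) * ((1 - a * cmod z) powr (1 - \<alpha>) - (1 - cmod z) powr (1 - \<alpha>))"
    if "z \<in> ball 0 1" "0 \<le> a" "a < 1" for z a
    using \<alpha> that by (intro seg_bound[OF hol]) (auto intro: bnd)
  show "cmod (f z) \<le> cmod (f 0) + S / (1 - \<alpha>)" if z: "z \<in> ball 0 1" for z
  proof -
    have "cmod (f z - f 0) \<le> S / (1 - \<alpha>) * (1 - (1 - cmod z) powr (1 - \<alpha>))"
      using sb[OF z, of 0] by simp
    also have "\<dots> \<le> S / (1 - \<alpha>) * 1"
      using \<alpha> S0 by (intro mult_left_mono) auto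
    finally have "cmod (f z - f 0) \<le> S / (1 - \<alpha>)" by simp
    then show ?thesis using norm_triangle_ineq2[of "f z" "f 0"] by linarith
  qed
  show "cmod (f z - f (of_real a * z)) \<le> S / (1 - \<alpha>) * (1 - a) powr (1 - \<alpha>)"
    if z: "z \<in> ball 0 1" and a: "0 \<le> a" "a < 1" for z a
  proof -
    define r where "r = cmod z"
    have r: "0 \<le> r" "r < 1" using z by (auto simp: r_def)
    have "(1 - a * r) powr (1 - \<alpha>) = ((1 - r) + r * (1 - a)) powr (1 - \<alpha>)"
      by (simp add: algebra_simps)
    also have "\<dots> \<le> (1 - r) powr (1 - \<alpha>) + (r * (1 - a)) powr (1 - \<alpha>)"
      using r a \<alpha> by (intro powr_subadd) auto
    also have "(r * (1 - a)) powr (1 - \<alpha>) \<le> (1 - a) powr (1 - \<alpha>)"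
      using r a \<alpha> by (intro powr_mono2) (auto simp: mult_left_le_one_le)
    finally have "(1 - a * r) powr (1 - \<alpha>) - (1 - r) powr (1 - \<alpha>) \<le> (1 - a) powr (1 - \<alpha>)"
      by linarith
    then have "S / (1 - \<alpha>) * ((1 - a * r) powr (1 - \<alpha>) - (1 - r) powr (1 - \<alpha>)) \<le> S / (1 - \<alpha>) * (1 - a) powr (1 - \<alpha>)"
      using \<alpha> S0 by (intro mult_left_mono) auto
    then show ?thesis using sb[OF z a] by (simp add: r_def)
  qed
qed

lemma main_bound_aux:
  assumes g: "g holomorphic_on ball 0 1" and \<beta>: "0 < \<beta>"
    and Mg: "\<And>z. z \<in> ball 0 1 \<Longrightarrow> (1 - (cmod z)\<^sup>2) powr (real n + \<beta> - 1) * cmod (g z) \<le> Mg"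
  shows "k \<le> n - 1 \<Longrightarrow> \<exists>C. \<forall>u B. u holomorphic_on ball 0 1 \<longrightarrow> (\<forall>z\<in>ball 0 1. cmod (u z) \<le> B) \<longrightarrow>
     (\<forall>z\<in>ball 0 1. (1 - (cmod z)\<^sup>2) powr (real n + \<beta> - 1 - real k) * cmod ((intop ^^ k) (\<lambda>z. u z * g z) z) \<le> B * C)"
proof (induction k)
  case 0
  show ?case
  proof (intro exI allI impI ballI)
    fix u B z assume u: "u holomorphic_on ball 0 1" and uB: "\<forall>z\<in>ball 0 1. cmod (u z) \<le> B" and z: "z \<in> ball (0::complex) 1"
    have "(1 - (cmod z)\<^sup>2) powr (real n + \<beta> - 1) * cmod (u z * g z) = cmod (u z) * ((1 - (cmod z)\<^sup>2) powr (real n + \<beta> - 1) * cmod (g z))"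
      by (simp add: norm_mult mult_ac)
    also have "\<dots> \<le> B * Mg"
    proof -
      have B0: "0 \<le> B" using uB by (meson centre_in_ball norm_ge_zero order_trans zero_less_one)
      show ?thesis using uB z Mg[OF z] B0 by (intro mult_mono) auto
    qed
    finally show "(1 - (cmod z)\<^sup>2) powr (real n + \<beta> - 1 - real 0) * cmod ((intop ^^ 0) (\<lambda>z. u z * g z) z) \<le> B * Mg"
      by simp
  qed
next
  case (Suc k)
  have "k \<le> n - 1" using Suc.prems by simp
  then obtain C where C0: "\<forall>u B. u holomorphic_on ball 0 1 \<longrightarrow> (\<forall>z\<in>ball 0 1. cmod (u z) \<le> B) \<longrightarrow>
     (\<forall>z\<in>ball 0 1. (1 - (cmod z)\<^sup>2) powr (real n + \<beta> - 1 - real k) * cmod ((intop ^^ k) (\<lambda>z. u z * g z) z) \<le> B * C)"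
    using Suc.IH by blast
  note C = C0[rule_format]
  define \<gamma> where "\<gamma> = real n + \<beta> - 1 - real k"
  have \<gamma>: "1 < \<gamma>" using Suc.prems \<beta> by (simp add: \<gamma>_def)
  show ?case
  proof (intro exI allI impI ballI)
    fix u B z assume u: "u holomorphic_on ball 0 1" and uB: "\<forall>z\<in>ball 0 1. cmod (u z) \<le> B" and z: "z \<in> ball (0::complex) 1"
    have hol: "(intop ^^ k) (\<lambda>z. u z * g z) holomorphic_on ball 0 1"
      by (intro intop_pow_holo holomorphic_on_mult u g)
    have "(1 - (cmod z)\<^sup>2) powr (\<gamma> - 1) * cmod (intop ((intop ^^ k) (\<lambda>z. u z * g z)) z) \<le> B * C * 2 powr (\<gamma> - 1) / (\<gamma> - 1)"
      using C[OF u] uB by (intro intop_growth[OF hol \<gamma> _ z]) (auto simp: \<gamma>_def)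
    then show "(1 - (cmod z)\<^sup>2) powr (real n + \<beta> - 1 - real (Suc k)) * cmod ((intop ^^ Suc k) (\<lambda>z. u z * g z) z)
       \<le> B * (C * 2 powr (\<gamma> - 1) / (\<gamma> - 1))"
      by (simp add: \<gamma>_def algebra_simps)
  qed
qed

lemma main_bound:
  assumes g: "g holomorphic_on ball 0 1" and \<beta>: "0 < \<beta>" and n: "1 \<le> n"
    and Mg: "\<And>z. z \<in> ball 0 1 \<Longrightarrow> (1 - (cmod z)\<^sup>2) powr (real n + \<beta> - 1) * cmod (g z) \<le> Mg"
  obtains C where "\<And>u B z. u holomorphic_on ball 0 1 \<Longrightarrow> (\<forall>z\<in>ball 0 1. cmod (u z) \<le> B) \<Longrightarrow> z \<in> ball 0 1 \<Longrightarrow>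
     (1 - (cmod z)\<^sup>2) powr \<beta> * cmod ((intop ^^ (n - 1)) (\<lambda>z. u z * g z) z) \<le> B * C"
proof -
  from main_bound_aux[OF g \<beta> Mg, of "n - 1"] obtain C where C: "\<forall>u B. u holomorphic_on ball 0 1 \<longrightarrow> (\<forall>z\<in>ball 0 1. cmod (u z) \<le> B) \<longrightarrow>
     (\<forall>z\<in>ball 0 1. (1 - (cmod z)\<^sup>2) powr (real n + \<beta> - 1 - real (n - 1)) * cmod ((intop ^^ (n - 1)) (\<lambda>z. u z * g z) z) \<le> B * C)"
    by auto
  have e: "real n + \<beta> - 1 - real (n - 1) = \<beta>" using n by (simp add: of_nat_diff)
  show ?thesis using C unfolding e by (intro that[of C]) blast
qed

lemma T_props:
  assumes h: "h holomorphic_on ball 0 1" and n: "1 \<le> n"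
  shows "(intop ^^ n) h holomorphic_on ball 0 1" and "(intop ^^ n) h 0 = 0"
    and "\<And>z. z \<in> ball 0 1 \<Longrightarrow> deriv ((intop ^^ n) h) z = (intop ^^ (n - 1)) h z"
proof -
  have e: "(intop ^^ n) h = intop ((intop ^^ (n - 1)) h)"
    using n by (metis Suc_diff_1 comp_apply funpow.simps(2) less_le_trans zero_less_one)
  show "(intop ^^ n) h holomorphic_on ball 0 1" by (rule intop_pow_holo[OF h])
  show "(intop ^^ n) h 0 = 0" by (simp add: e intop_0)
  show "deriv ((intop ^^ n) h) z = (intop ^^ (n - 1)) h z" if "z \<in> ball 0 1" for z
    unfolding e using intop_deriv_eq[OF intop_pow_holo[OF h] that] .
qed

lemma lower_aux:
  assumes g: "g holomorphic_on ball 0 1" and \<beta>: "0 < \<beta>"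
    and K: "\<And>z. z \<in> ball 0 1 \<Longrightarrow> (1 - (cmod z)\<^sup>2) powr \<beta> * cmod ((intop ^^ (n - 1)) g z) \<le> K"
  shows "j \<le> n - 1 \<Longrightarrow> \<exists>K. \<forall>z\<in>ball 0 1. (1 - (cmod z)\<^sup>2) powr (\<beta> + real j) * cmod ((intop ^^ (n - 1 - j)) g z) \<le> K"
proof (induction j)
  case 0 then show ?case using K by (intro exI[of _ K]) auto
next
  case (Suc j)
  have "j \<le> n - 1" using Suc.prems by simp
  then obtain K where K0: "\<forall>z\<in>ball 0 1. (1 - (cmod z)\<^sup>2) powr (\<beta> + real j) * cmod ((intop ^^ (n - 1 - j)) g z) \<le> K"
    using Suc.IH by blast
  note K = K0[rule_format]
  define m where "m = n - 1 - Suc j"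
  have nm: "n - 1 - j = Suc m" using Suc.prems by (simp add: m_def)
  have hol: "(intop ^^ (n - 1 - j)) g holomorphic_on ball 0 1" by (rule intop_pow_holo[OF g])
  show ?case
  proof (intro exI ballI)
    fix z assume z: "z \<in> ball (0::complex) 1"
    have "(1 - (cmod z)\<^sup>2) powr (\<beta> + real j + 1) * cmod (deriv ((intop ^^ (n - 1 - j)) g) z) \<le> 4 powr (\<beta> + real j + 1) * K"
      using \<beta> by (intro deriv_growth[OF hol _ K z]) auto
    moreover have "deriv ((intop ^^ (n - 1 - j)) g) z = (intop ^^ m) g z"
      unfolding nm using intop_deriv_eq[OF intop_pow_holo[OF g] z] by simp
    ultimately show "(1 - (cmod z)\<^sup>2) powr (\<beta> + real (Suc j)) * cmod ((intop ^^ (n - 1 - Suc j)) g z) \<le> 4 powr (\<beta> + real j + 1) * K"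
      by (simp add: m_def add_ac)
  qed
qed

lemma lower:
  assumes g: "g holomorphic_on ball 0 1" and \<beta>: "0 < \<beta>" and n: "1 \<le> n"
    and K: "\<And>z. z \<in> ball 0 1 \<Longrightarrow> (1 - (cmod z)\<^sup>2) powr \<beta> * cmod ((intop ^^ (n - 1)) g z) \<le> K"
  shows "bdd_above ((\<lambda>z. (1 - (cmod z)\<^sup>2) powr (real n + \<beta> - 1) * cmod (g z)) ` ball 0 1)"
proof -
  obtain K' where K': "\<forall>z\<in>ball 0 1. (1 - (cmod z)\<^sup>2) powr (\<beta> + real (n - 1)) * cmod ((intop ^^ (n - 1 - (n - 1))) g z) \<le> K'"
    using lower_aux[OF g \<beta> K, of "n - 1"] by auto
  have e: "\<beta> + real (n - 1) = real n + \<beta> - 1" using n by (simp add: of_nat_diff)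
  from K' have "\<forall>z\<in>ball 0 1. (1 - (cmod z)\<^sup>2) powr (real n + \<beta> - 1) * cmod (g z) \<le> K'"
    unfolding e by simp
  then show ?thesis by (intro bdd_aboveI2[where M=K']) auto
qed

lemma T_bound:
  assumes g: "g holomorphic_on ball 0 1" and n: "1 \<le> n"
    and C: "\<And>u B z. u holomorphic_on ball 0 1 \<Longrightarrow> (\<forall>z\<in>ball 0 1. cmod (u z) \<le> B) \<Longrightarrow> z \<in> ball 0 1 \<Longrightarrow>
       (1 - (cmod z)\<^sup>2) powr \<beta> * cmod ((intop ^^ (n - 1)) (\<lambda>z. u z * g z) z) \<le> B * C"
    and u: "u holomorphic_on ball 0 1" and uB: "\<forall>z\<in>ball 0 1. cmod (u z) \<le> B"
  shows "(intop ^^ n) (\<lambda>z. u z * g z) \<in> bloch_space \<beta>"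
    and "bloch_norm \<beta> ((intop ^^ n) (\<lambda>z. u z * g z)) \<le> B * C"
proof -
  let ?h = "\<lambda>z. u z * g z"
  have hh: "?h holomorphic_on ball 0 1" using u g by (rule holomorphic_on_mult)
  have bd: "\<And>z. z \<in> ball 0 1 \<Longrightarrow> (1 - (cmod z)\<^sup>2) powr \<beta> * cmod (deriv ((intop ^^ n) ?h) z) \<le> B * C"
    using C[OF u uB] T_props(3)[OF hh n] by simp
  show "(intop ^^ n) ?h \<in> bloch_space \<beta>"
    unfolding bloch_space_def using T_props(1)[OF hh n] bd by (auto intro!: bdd_aboveI2)
  have "(SUP z\<in>ball 0 1. (1 - (cmod z)\<^sup>2) powr \<beta> * cmod (deriv ((intop ^^ n) ?h) z)) \<le> B * C"
    by (rule cSUP_least) (use bd in auto)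
  then show "bloch_norm \<beta> ((intop ^^ n) ?h) \<le> B * C"
    by (simp add: bloch_norm_def T_props(2)[OF hh n])
qed

lemma bloch_norm_nonneg:
  assumes "bdd_above ((\<lambda>z. (1 - (cmod z)\<^sup>2) powr \<gamma> * cmod (deriv f z)) ` ball 0 1)"
  shows "0 \<le> bloch_norm \<gamma> f"
proof -
  have "0 \<le> (SUP z\<in>ball 0 1. (1 - (cmod z)\<^sup>2) powr \<gamma> * cmod (deriv f z))"
    by (rule cSUP_upper2[OF assms, of 0]) auto
  then show ?thesis by (simp add: bloch_norm_def)
qed

lemma T_diff:
  assumes g: "g holomorphic_on ball 0 1" and n: "1 \<le> n"
    and C: "\<And>u B z. u holomorphic_on ball 0 1 \<Longrightarrow> (\<forall>z\<in>ball 0 1. cmod (u z) \<le> B) \<Longrightarrow> z \<in> ball 0 1 \<Longrightarrow>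
       (1 - (cmod z)\<^sup>2) powr \<beta> * cmod ((intop ^^ (n - 1)) (\<lambda>z. u z * g z) z) \<le> B * C"
    and u1: "u1 holomorphic_on ball 0 1" and u2: "u2 holomorphic_on ball 0 1"
    and uB: "\<forall>z\<in>ball 0 1. cmod (u1 z - u2 z) \<le> B"
  shows "bloch_norm \<beta> (\<lambda>z. (intop ^^ n) (\<lambda>z. u1 z * g z) z - (intop ^^ n) (\<lambda>z. u2 z * g z) z) \<le> B * C"
    and "0 \<le> bloch_norm \<beta> (\<lambda>z. (intop ^^ n) (\<lambda>z. u1 z * g z) z - (intop ^^ n) (\<lambda>z. u2 z * g z) z)"
proof -
  let ?h1 = "\<lambda>z. u1 z * g z" and ?h2 = "\<lambda>z. u2 z * g z"
  let ?D = "\<lambda>z. (intop ^^ n) ?h1 z - (intop ^^ n) ?h2 z"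
  have h1: "?h1 holomorphic_on ball 0 1" using u1 g by (rule holomorphic_on_mult)
  have h2: "?h2 holomorphic_on ball 0 1" using u2 g by (rule holomorphic_on_mult)
  have ud: "(\<lambda>z. u1 z - u2 z) holomorphic_on ball 0 1" using u1 u2 by (rule holomorphic_on_diff)
  have dD: "deriv ?D z = (intop ^^ (n - 1)) (\<lambda>z. (u1 z - u2 z) * g z) z" if z: "z \<in> ball 0 1" for z
  proof -
    have d1: "(intop ^^ n) ?h1 field_differentiable at z"
      using T_props(1)[OF h1 n] z holomorphic_on_imp_differentiable_at by blast
    have d2: "(intop ^^ n) ?h2 field_differentiable at z"
      using T_props(1)[OF h2 n] z holomorphic_on_imp_differentiable_at by blast
    have "deriv ?D z = deriv ((intop ^^ n) ?h1) z - deriv ((intop ^^ n) ?h2) z"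
      using deriv_diff[OF d1 d2] by simp
    also have "\<dots> = (intop ^^ (n - 1)) ?h1 z - (intop ^^ (n - 1)) ?h2 z"
      using T_props(3)[OF h1 n z] T_props(3)[OF h2 n z] by simp
    also have "\<dots> = (intop ^^ (n - 1)) (\<lambda>w. ?h1 w - ?h2 w) z"
      using intop_pow_diff[OF h1 h2 z] by simp
    also have "(\<lambda>w. ?h1 w - ?h2 w) = (\<lambda>z. (u1 z - u2 z) * g z)"
      by (simp add: algebra_simps)
    finally show ?thesis .
  qed
  have bd: "\<And>z. z \<in> ball 0 1 \<Longrightarrow> (1 - (cmod z)\<^sup>2) powr \<beta> * cmod (deriv ?D z) \<le> B * C"
    using C[OF ud uB] dD by simp
  have "(SUP z\<in>ball 0 1. (1 - (cmod z)\<^sup>2) powr \<beta> * cmod (deriv ?D z)) \<le> B * C"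
    by (rule cSUP_least) (use bd in auto)
  then show "bloch_norm \<beta> ?D \<le> B * C"
    by (simp add: bloch_norm_def T_props(2)[OF h1 n] T_props(2)[OF h2 n])
  show "0 \<le> bloch_norm \<beta> ?D"
    by (rule bloch_norm_nonneg) (use bd in \<open>auto intro!: bdd_aboveI2\<close>)
qed

lemma small_choice:
  fixes B0 \<epsilon> p :: real
  assumes "0 \<le> B0" "0 < \<epsilon>" "0 < p"
  obtains a where "0 \<le> a" "a < 1" "B0 * (1 - a) powr p \<le> \<epsilon>"
proof -
  define X where "X = \<epsilon> / (B0 + 1)"
  have X: "0 < X" using assms by (simp add: X_def)
  define \<delta> where "\<delta> = min (1/2) (X powr (1 / p))"
  have \<delta>: "0 < \<delta>" "\<delta> \<le> 1/2" using X by (auto simp: \<delta>_def)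
  have "\<delta> powr p \<le> (X powr (1 / p)) powr p"
    using \<delta> assms by (intro powr_mono2) (auto simp: \<delta>_def)
  also have "\<dots> = X" using assms X by (simp add: powr_powr)
  finally have dp: "\<delta> powr p \<le> X" .
  have "B0 * \<delta> powr p \<le> B0 * X" using dp assms by (intro mult_left_mono) auto
  also have "\<dots> \<le> \<epsilon>"
  proof -
    have "B0 * X = \<epsilon> * (B0 / (B0 + 1))" using assms by (simp add: X_def field_simps)
    also have "\<dots> \<le> \<epsilon> * 1" using assms by (intro mult_left_mono) auto
    finally show ?thesis by simp
  qed
  finally have "B0 * (1 - (1 - \<delta>)) powr p \<le> \<epsilon>" by simp
  then show ?thesis using \<delta> by (intro that[of "1 - \<delta>"]) auto
qed

lemma compact_part:
  fixes F :: "nat \<Rightarrow> complex \<Rightarrow> complex" and M :: real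
  assumes g: "g holomorphic_on ball 0 1" and n: "1 \<le> n" and \<alpha>: "0 < \<alpha>" "\<alpha> < 1"
    and C: "\<And>u B z. u holomorphic_on ball 0 1 \<Longrightarrow> (\<forall>z\<in>ball 0 1. cmod (u z) \<le> B) \<Longrightarrow> z \<in> ball 0 1 \<Longrightarrow>
       (1 - (cmod z)\<^sup>2) powr \<beta> * cmod ((intop ^^ (n - 1)) (\<lambda>z. u z * g z) z) \<le> B * C"
    and C0: "0 \<le> C"
    and Fb: "\<forall>k. F k \<in> bloch_space \<alpha>" and M: "\<forall>k. bloch_norm \<alpha> (F k) \<le> M"
  shows "\<exists>r h. strict_mono r \<and> h \<in> bloch_space \<beta> \<and>
           (\<lambda>k. bloch_norm \<beta> (\<lambda>z. (intop ^^ n) (\<lambda>z. F (r k) z * g z) z - h z)) \<longlonglongrightarrow> 0"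
proof -
  define B0 where "B0 = M / (1 - \<alpha>)"
  note bf = bloch_facts[OF Fb[rule_format] \<alpha>]
  have Fhol: "F k holomorphic_on ball 0 1" for k using bf(1) .
  have M0: "0 \<le> M" using M[rule_format, of 0] bf(3)[of 0] bf(4)[of 0] by (smt (verit) norm_ge_zero)
  have B00: "0 \<le> B0" using M0 \<alpha> by (simp add: B0_def)
  have Fbd: "cmod (F k z) \<le> B0" if z: "z \<in> ball 0 1" for k z
  proof -
    let ?S = "(SUP z\<in>ball 0 1. (1 - (cmod z)\<^sup>2) powr \<alpha> * cmod (deriv (F k) z))"
    have "cmod (F k z) \<le> cmod (F k 0) + ?S / (1 - \<alpha>)" using bf(5)[OF z] .
    also have "\<dots> \<le> cmod (F k 0) / (1 - \<alpha>) + ?S / (1 - \<alpha>)"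
    proof -
      have "cmod (F k 0) * (1 - \<alpha>) \<le> cmod (F k 0)" using \<alpha> by (intro mult_left_le) auto
      then have "cmod (F k 0) \<le> cmod (F k 0) / (1 - \<alpha>)" using \<alpha> by (simp add: le_divide_eq)
      then show ?thesis by simp
    qed
    also have "\<dots> = bloch_norm \<alpha> (F k) / (1 - \<alpha>)" using bf(4) by (simp add: add_divide_distrib)
    also have "\<dots> \<le> B0" unfolding B0_def using M \<alpha> by (simp add: divide_right_mono)
    finally show ?thesis .
  qed
  have Fhd: "cmod (F k z - F k (of_real a * z)) \<le> B0 * (1 - a) powr (1 - \<alpha>)"
    if z: "z \<in> ball 0 1" and a: "0 \<le> a" "a < 1" for k z a
  proof -
    let ?S = "(SUP z\<in>ball 0 1. (1 - (cmod z)\<^sup>2) powr \<alpha> * cmod (deriv (F k) z))"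
    have "?S \<le> M" using M[rule_format, of k] bf(4)[of k] by (smt (verit) norm_ge_zero)
    then have "?S / (1 - \<alpha>) \<le> B0" unfolding B0_def using \<alpha> by (simp add: divide_right_mono)
    then have "?S / (1 - \<alpha>) * (1 - a) powr (1 - \<alpha>) \<le> B0 * (1 - a) powr (1 - \<alpha>)"
      by (intro mult_right_mono) auto
    then show ?thesis using bf(6)[OF z a, of k] by linarith
  qed
  define \<H> where "\<H> = {h. h holomorphic_on ball 0 1 \<and> (\<forall>z\<in>ball 0 1. cmod (h z) \<le> B0)}"
  obtain \<phi> r where \<phi>hol: "\<phi> holomorphic_on ball 0 1" and r: "strict_mono (r :: nat \<Rightarrow> nat)"
    and ptw: "\<And>x. x \<in> ball 0 1 \<Longrightarrow> ((\<lambda>k. F (r k) x) \<longlongrightarrow> \<phi> x) sequentially"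
    and unif: "\<And>K. \<lbrakk>compact K; K \<subseteq> ball 0 1\<rbrakk> \<Longrightarrow> uniform_limit K (F \<circ> r) \<phi> sequentially"
  proof (rule Montel[of "ball 0 1" \<H> F])
    show "\<And>h. h \<in> \<H> \<Longrightarrow> h holomorphic_on ball 0 1" by (simp add: \<H>_def)
    show "\<exists>B. \<forall>h\<in>\<H>. \<forall>z\<in>K. cmod (h z) \<le> B" if "compact K" "K \<subseteq> ball 0 1" for K
      using that by (auto simp: \<H>_def intro!: exI[of _ B0])
    show "range F \<subseteq> \<H>" using Fhol Fbd by (auto simp: \<H>_def)
  qed auto
  have \<phi>bd: "cmod (\<phi> z) \<le> B0" if z: "z \<in> ball 0 1" for z
    by (rule Lim_norm_ubound[OF _ ptw[OF z]]) (use Fbd[OF z] in auto)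
  have \<phi>hd: "cmod (\<phi> z - \<phi> (of_real a * z)) \<le> B0 * (1 - a) powr (1 - \<alpha>)"
    if z: "z \<in> ball 0 1" and a: "0 \<le> a" "a < 1" for z a
  proof -
    have az: "of_real a * z \<in> ball 0 1"
    proof -
      have "cmod (of_real a * z) = a * cmod z" using a by (simp add: norm_mult)
      also have "\<dots> \<le> cmod z" using a by (simp add: mult_left_le_one_le)
      finally show ?thesis using z by simp
    qed
    show ?thesis
      by (rule Lim_norm_ubound[OF _ tendsto_diff[OF ptw[OF z] ptw[OF az]]]) (use Fhd[OF z a] in auto)
  qed
  have uc: "\<exists>N. \<forall>k\<ge>N. \<forall>z\<in>ball 0 1. cmod (F (r k) z - \<phi> z) \<le> \<epsilon>" if \<epsilon>: "0 < \<epsilon>" for \<epsilon>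
  proof -
    obtain a where a: "0 \<le> a" "a < 1" and ab: "B0 * (1 - a) powr (1 - \<alpha>) \<le> \<epsilon> / 3"
      using small_choice[OF B00, of "\<epsilon> / 3" "1 - \<alpha>"] \<epsilon> \<alpha> by auto
    have sub: "cball 0 a \<subseteq> ball (0::complex) 1" using a by auto
    have "\<forall>\<^sub>F k in sequentially. \<forall>x\<in>cball 0 a. dist ((F \<circ> r) k x) (\<phi> x) < \<epsilon> / 3"
      using uniform_limitD[OF unif[OF compact_cball sub], of "\<epsilon> / 3"] \<epsilon> by (simp add: o_def)
    then obtain N where N: "\<And>k x. k \<ge> N \<Longrightarrow> x \<in> cball 0 a \<Longrightarrow> cmod (F (r k) x - \<phi> x) < \<epsilon> / 3"
      unfolding eventually_sequentially dist_norm o_def by blast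
    show ?thesis
    proof (intro exI allI impI ballI)
      fix k z assume k: "N \<le> k" and z: "z \<in> ball (0::complex) 1"
      have az: "of_real a * z \<in> cball 0 a"
      proof -
        have "cmod (of_real a * z) = a * cmod z" using a by (simp add: norm_mult)
        also have "\<dots> \<le> a" using a z by (intro mult_left_le) auto
        finally show ?thesis by simp
      qed
      define X where "X = F (r k) z - F (r k) (of_real a * z)"
      define Y where "Y = F (r k) (of_real a * z) - \<phi> (of_real a * z)"
      define Z where "Z = \<phi> (of_real a * z) - \<phi> z"
      have eq: "F (r k) z - \<phi> z = X + Y + Z" by (simp add: X_def Y_def Z_def)
      have t1: "cmod (X + Y + Z) \<le> cmod (X + Y) + cmod Z" by (rule norm_triangle_ineq)
      have t2: "cmod (X + Y) \<le> cmod X + cmod Y" by (rule norm_triangle_ineq)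
      have bX: "cmod X \<le> \<epsilon> / 3" using Fhd[OF z a, of "r k"] ab by (simp add: X_def)
      have bY: "cmod Y \<le> \<epsilon> / 3" using N[OF k az] by (simp add: Y_def)
      have bZ: "cmod Z \<le> \<epsilon> / 3" using \<phi>hd[OF z a] ab by (simp add: Z_def norm_minus_commute)
      have "cmod (F (r k) z - \<phi> z) \<le> \<epsilon> / 3 + \<epsilon> / 3 + \<epsilon> / 3"
        unfolding eq using t1 t2 bX bY bZ by linarith
      then show "cmod (F (r k) z - \<phi> z) \<le> \<epsilon>" by simp
    qed
  qed
  define h where "h = (intop ^^ n) (\<lambda>z. \<phi> z * g z)"
  have hB: "h \<in> bloch_space \<beta>"
    unfolding h_def using \<phi>bd by (intro T_bound(1)[OF g n C \<phi>hol]) auto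
  have lim: "(\<lambda>k. bloch_norm \<beta> (\<lambda>z. (intop ^^ n) (\<lambda>z. F (r k) z * g z) z - h z)) \<longlonglongrightarrow> 0"
  proof (rule LIMSEQ_I)
    fix e :: real assume e: "0 < e"
    define \<epsilon> where "\<epsilon> = e / (2 * (C + 1))"
    have \<epsilon>: "0 < \<epsilon>" using e C0 by (simp add: \<epsilon>_def)
    have \<epsilon>C: "\<epsilon> * C < e"
    proof -
      have "\<epsilon> * C = e * (C / (2 * (C + 1)))" by (simp add: \<epsilon>_def)
      also have "C / (2 * (C + 1)) < 1" using C0 by (simp add: field_simps)
      then have "e * (C / (2 * (C + 1))) < e * 1" using e by (intro mult_strict_left_mono) auto
      finally show ?thesis by simp
    qed
    obtain N where N: "\<And>k z. k \<ge> N \<Longrightarrow> z \<in> ball 0 1 \<Longrightarrow> cmod (F (r k) z - \<phi> z) \<le> \<epsilon>"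
      using uc[OF \<epsilon>] by blast
    show "\<exists>no. \<forall>k\<ge>no. norm (bloch_norm \<beta> (\<lambda>z. (intop ^^ n) (\<lambda>z. F (r k) z * g z) z - h z) - 0) < e"
    proof (intro exI allI impI)
      fix k assume k: "N \<le> k"
      have ub: "\<forall>z\<in>ball 0 1. cmod (F (r k) z - \<phi> z) \<le> \<epsilon>" using N[OF k] by blast
      note td = T_diff[OF g n C Fhol \<phi>hol ub, unfolded h_def[symmetric]]
      show "norm (bloch_norm \<beta> (\<lambda>z. (intop ^^ n) (\<lambda>z. F (r k) z * g z) z - h z) - 0) < e"
        using td \<epsilon>C by simp
    qed
  qed
  show ?thesis using r hB lim by blast
qed

theorem proposition4p2:
  fixes \<alpha> \<beta> :: real and n :: nat and g :: "complex \<Rightarrow> complex"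
  assumes "\<beta> > 0" and "0 < \<alpha>" and "\<alpha> < 1" and "n \<ge> 1"
    and "g holomorphic_on ball 0 1"
  defines "T \<equiv> (\<lambda>f. (intop ^^ n) (\<lambda>z. f z * g z))"
  shows "(bounded_op_bloch T \<alpha> \<beta> \<longleftrightarrow> compact_op_bloch T \<alpha> \<beta>) \<and>
         (compact_op_bloch T \<alpha> \<beta> \<longleftrightarrow>
            bdd_above ((\<lambda>z. (1 - (cmod z)\<^sup>2) powr (real n + \<beta> - 1) * cmod (g z)) ` ball 0 1))"
proof -
  note \<beta> = assms(1) and \<alpha> = assms(2,3) and n = assms(4) and g = assms(5)
  let ?P = "bdd_above ((\<lambda>z. (1 - (cmod z)\<^sup>2) powr (real n + \<beta> - 1) * cmod (g z)) ` ball 0 1)"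
  have one: "(\<lambda>z. 1) \<in> bloch_space \<alpha>"
    by (simp add: bloch_space_def) (intro bdd_aboveI2[where M=0], simp)
  have T1: "?P" if T1B: "T (\<lambda>z. 1) \<in> bloch_space \<beta>"
  proof -
    have e: "T (\<lambda>z. 1) = (intop ^^ n) g" by (simp add: T_def)
    have "bdd_above ((\<lambda>z. (1 - (cmod z)\<^sup>2) powr \<beta> * cmod (deriv ((intop ^^ n) g) z)) ` ball 0 1)"
      using T1B by (simp add: e bloch_space_def)
    then obtain K where K: "\<forall>x\<in>(\<lambda>z. (1 - (cmod z)\<^sup>2) powr \<beta> * cmod (deriv ((intop ^^ n) g) z)) ` ball 0 1. x \<le> K"
      unfolding bdd_above_def by blast
    show ?thesis
    proof (rule lower[OF g \<beta> n])
      fix z :: complex assume z: "z \<in> ball 0 1"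
      have "(1 - (cmod z)\<^sup>2) powr \<beta> * cmod (deriv ((intop ^^ n) g) z) \<le> K" using K z by blast
      then show "(1 - (cmod z)\<^sup>2) powr \<beta> * cmod ((intop ^^ (n - 1)) g z) \<le> K"
        using T_props(3)[OF g n z] by simp
    qed
  qed
  have main: "bounded_op_bloch T \<alpha> \<beta> \<and> compact_op_bloch T \<alpha> \<beta>" if P: ?P
  proof -
    obtain Mg where Mg0: "\<forall>x\<in>(\<lambda>z. (1 - (cmod z)\<^sup>2) powr (real n + \<beta> - 1) * cmod (g z)) ` ball 0 1. x \<le> Mg"
      using P unfolding bdd_above_def by blast
    have Mg: "\<And>z. z \<in> ball 0 1 \<Longrightarrow> (1 - (cmod z)\<^sup>2) powr (real n + \<beta> - 1) * cmod (g z) \<le> Mg"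
      using Mg0 by blast
    obtain C where C: "\<And>u B z. u holomorphic_on ball 0 1 \<Longrightarrow> (\<forall>z\<in>ball 0 1. cmod (u z) \<le> B) \<Longrightarrow> z \<in> ball 0 1 \<Longrightarrow>
       (1 - (cmod z)\<^sup>2) powr \<beta> * cmod ((intop ^^ (n - 1)) (\<lambda>z. u z * g z) z) \<le> B * C"
      using main_bound[OF g \<beta> n Mg] by blast
    have C0: "0 \<le> C"
    proof -
      have "(1 - (cmod (0::complex))\<^sup>2) powr \<beta> * cmod ((intop ^^ (n - 1)) (\<lambda>z. (\<lambda>_. 1::complex) z * g z) 0) \<le> 1 * C"
        by (rule C) auto
      moreover have "0 \<le> (1 - (cmod (0::complex))\<^sup>2) powr \<beta> * cmod ((intop ^^ (n - 1)) (\<lambda>z. (\<lambda>_. 1::complex) z * g z) 0)"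
        by simp
      ultimately show ?thesis by linarith
    qed
    have inB: "T f \<in> bloch_space \<beta>" and nB: "bloch_norm \<beta> (T f) \<le> C / (1 - \<alpha>) * bloch_norm \<alpha> f"
      if f: "f \<in> bloch_space \<alpha>" for f
    proof -
      note bf = bloch_facts[OF f \<alpha>]
      let ?S = "(SUP z\<in>ball 0 1. (1 - (cmod z)\<^sup>2) powr \<alpha> * cmod (deriv f z))"
      let ?B = "cmod (f 0) + ?S / (1 - \<alpha>)"
      have fB: "\<forall>z\<in>ball 0 1. cmod (f z) \<le> ?B" using bf(5) by blast
      show "T f \<in> bloch_space \<beta>" unfolding T_def by (rule T_bound(1)[OF g n C bf(1) fB])
      have "bloch_norm \<beta> (T f) \<le> ?B * C" unfolding T_def by (rule T_bound(2)[OF g n C bf(1) fB])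
      also have "?B \<le> bloch_norm \<alpha> f / (1 - \<alpha>)"
      proof -
        have "cmod (f 0) * (1 - \<alpha>) \<le> cmod (f 0)" using \<alpha> by (intro mult_left_le) auto
        then have "cmod (f 0) \<le> cmod (f 0) / (1 - \<alpha>)" using \<alpha> by (simp add: le_divide_eq)
        then show ?thesis using bf(4) by (simp add: add_divide_distrib)
      qed
      then have "?B * C \<le> bloch_norm \<alpha> f / (1 - \<alpha>) * C" using C0 by (intro mult_right_mono)
      also have "\<dots> = C / (1 - \<alpha>) * bloch_norm \<alpha> f" by simp
      finally show "bloch_norm \<beta> (T f) \<le> C / (1 - \<alpha>) * bloch_norm \<alpha> f" .
    qed
    have bo: "bounded_op_bloch T \<alpha> \<beta>"
      unfolding bounded_op_bloch_def using inB nB by blast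
    have co: "compact_op_bloch T \<alpha> \<beta>"
      unfolding compact_op_bloch_def
    proof (intro conjI allI impI ballI)
      show "\<And>f. f \<in> bloch_space \<alpha> \<Longrightarrow> T f \<in> bloch_space \<beta>" by (rule inB)
      fix F :: "nat \<Rightarrow> complex \<Rightarrow> complex"
      assume FF: "(\<forall>k. F k \<in> bloch_space \<alpha>) \<and> (\<exists>M. \<forall>k. bloch_norm \<alpha> (F k) \<le> M)"
      then obtain M where M: "\<forall>k. bloch_norm \<alpha> (F k) \<le> M" by blast
      show "\<exists>r h. strict_mono r \<and> h \<in> bloch_space \<beta> \<and> (\<lambda>k. bloch_norm \<beta> (\<lambda>z. T (F (r k)) z - h z)) \<longlonglongrightarrow> 0"
        unfolding T_def using compact_part[OF g n \<alpha> C C0 _ M] FF by simp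
    qed
    show ?thesis using bo co by blast
  qed
  have b1: "T (\<lambda>z. 1) \<in> bloch_space \<beta>" if "bounded_op_bloch T \<alpha> \<beta>"
    using that one unfolding bounded_op_bloch_def by blast
  have c1: "T (\<lambda>z. 1) \<in> bloch_space \<beta>" if "compact_op_bloch T \<alpha> \<beta>"
    using that one unfolding compact_op_bloch_def by blast
  show ?thesis
  proof (intro conjI iffI)
    assume "bounded_op_bloch T \<alpha> \<beta>" then show "compact_op_bloch T \<alpha> \<beta>" using main[OF T1[OF b1]] by simp
  next
    assume "compact_op_bloch T \<alpha> \<beta>" then show "bounded_op_bloch T \<alpha> \<beta>" using main[OF T1[OF c1]] by simp
  next
    assume "compact_op_bloch T \<alpha> \<beta>" then show ?P using T1[OF c1] by simp
  next
    assume ?P then show "compact_op_bloch T \<alpha> \<beta>" using main by simp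
  qed
qed

end
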